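(* For every positive integer $t$, every $t$-spike $Q$ with an associated $t$-spike partition $(B_1,\dots,B_t;C_1,\dots,C_t)$, and every labeling $L$ of $Q$ for which there exist distinct $p,q$ with $L(b)=p$ for all $b\in B_1\cup\dots\cup B_t$ and $L(c)=q$ for all $c\in C_1\cup\dots\cup C_t$, we have $\mathrm{cwd}(Q,L)\le 4$.
   Context: Graphs are finite and simple. For disjoint vertex sets $X,Y$, $X$ is complete (anticomplete) to $Y$ if every vertex of $X$ is adjacent (nonadjacent) to every vertex of $Y$. A $t$-spike is a graph $Q$ whose vertex set can be partitioned into nonempty cliques $B_1,\dots,B_t,C_1,\dots,C_t$ such that the $B_i$ are pairwise anticomplete, the $C_i$ are pairwise complete, $B_i$ is anticomplete to $C_j$ for all $i\ne j$, and for each $i$, $B_i$ can be ordered $b^i_1,\dots,b^i_{r_i}$ so that $N_Q(b^i_{r_i})\cap C_i\subseteq\dots\subseteq N_Q(b^i_1)\cap C_i$; $(B_1,\dots,B_t;C_1,\dots,C_t)$ is then a $t$-spike partition. A labeling of $Q$ is any function with domain $V(Q)$, and $(Q,L)$ is a labeled graph. The clique-width $\mathrm{cwd}(Q,L)$ is the minimum number of labels needed to construct $Q$ with final labeling exactly $L$ using: (1) creation of a new vertex with label $i$; (2) disjoint union of two labeled graphs; (3) joining by an edge every vertex labeled $i$ to every vertex labeled $j$ ($i\ne j$); (4) renaming label $i$ to label $j$. *)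

theory Defs
  imports Main
begin

text \<open>A graph is given by a vertex set V and an adjacency relation E; only E restricted
to V matters.\<close>

definition simple_graph :: "'v set \<Rightarrow> ('v \<Rightarrow> 'v \<Rightarrow> bool) \<Rightarrow> bool" where
  "simple_graph V E \<longleftrightarrow> finite V \<and> (\<forall>x\<in>V. \<forall>y\<in>V. E x y \<longleftrightarrow> E y x) \<and> (\<forall>x\<in>V. \<not> E x x)"

definition is_clique :: "('v \<Rightarrow> 'v \<Rightarrow> bool) \<Rightarrow> 'v set \<Rightarrow> bool" where
  "is_clique E X \<longleftrightarrow> (\<forall>x\<in>X. \<forall>y\<in>X. x \<noteq> y \<longrightarrow> E x y)"

definition complete_to :: "('v \<Rightarrow> 'v \<Rightarrow> bool) \<Rightarrow> 'v set \<Rightarrow> 'v set \<Rightarrow> bool" where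
  "complete_to E X Y \<longleftrightarrow> (\<forall>x\<in>X. \<forall>y\<in>Y. E x y)"

definition anticomplete_to :: "('v \<Rightarrow> 'v \<Rightarrow> bool) \<Rightarrow> 'v set \<Rightarrow> 'v set \<Rightarrow> bool" where
  "anticomplete_to E X Y \<longleftrightarrow> (\<forall>x\<in>X. \<forall>y\<in>Y. \<not> E x y)"

definition nbhd :: "'v set \<Rightarrow> ('v \<Rightarrow> 'v \<Rightarrow> bool) \<Rightarrow> 'v \<Rightarrow> 'v set" where
  "nbhd V E x = {y \<in> V. E x y}"

definition spike_partition ::
  "'v set \<Rightarrow> ('v \<Rightarrow> 'v \<Rightarrow> bool) \<Rightarrow> nat \<Rightarrow> (nat \<Rightarrow> 'v set) \<Rightarrow> (nat \<Rightarrow> 'v set) \<Rightarrow> bool" where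
  "spike_partition V E t B C \<longleftrightarrow>
     \<comment> \<open>partition of V into the 2t nonempty sets\<close>
     (\<Union>i\<in>{1..t}. B i \<union> C i) = V \<and>
     (\<forall>i\<in>{1..t}. B i \<noteq> {} \<and> C i \<noteq> {}) \<and>
     (\<forall>i\<in>{1..t}. \<forall>j\<in>{1..t}. B i \<inter> C j = {}) \<and>
     (\<forall>i\<in>{1..t}. \<forall>j\<in>{1..t}. i \<noteq> j \<longrightarrow> B i \<inter> B j = {} \<and> C i \<inter> C j = {}) \<and>
     \<comment> \<open>cliques\<close>
     (\<forall>i\<in>{1..t}. is_clique E (B i) \<and> is_clique E (C i)) \<and>
     \<comment> \<open>adjacency between parts\<close>
     (\<forall>i\<in>{1..t}. \<forall>j\<in>{1..t}. i \<noteq> j \<longrightarrow>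
        anticomplete_to E (B i) (B j) \<and> complete_to E (C i) (C j) \<and> anticomplete_to E (B i) (C j)) \<and>
     \<comment> \<open>nested neighbourhoods into C_i\<close>
     (\<forall>i\<in>{1..t}. \<exists>bs. distinct bs \<and> set bs = B i \<and>
        (\<forall>k l. k \<le> l \<and> l < length bs \<longrightarrow>
           nbhd V E (bs ! l) \<inter> C i \<subseteq> nbhd V E (bs ! k) \<inter> C i))"

definition is_spike :: "'v set \<Rightarrow> ('v \<Rightarrow> 'v \<Rightarrow> bool) \<Rightarrow> nat \<Rightarrow> bool" where
  "is_spike V E t \<longleftrightarrow> (\<exists>B C. spike_partition V E t B C)"

datatype ('v, 'a) cwexp =
    Create 'v 'a
  | DUnion "('v, 'a) cwexp" "('v, 'a) cwexp"
  | Join 'a 'a "('v, 'a) cwexp"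
  | Relabel 'a 'a "('v, 'a) cwexp"

fun cw_verts :: "('v, 'a) cwexp \<Rightarrow> 'v set" where
  "cw_verts (Create v i) = {v}"
| "cw_verts (DUnion e f) = cw_verts e \<union> cw_verts f"
| "cw_verts (Join i j e) = cw_verts e"
| "cw_verts (Relabel i j e) = cw_verts e"

fun cw_lab :: "('v, 'a) cwexp \<Rightarrow> 'v \<Rightarrow> 'a" where
  "cw_lab (Create v i) = (\<lambda>_. i)"
| "cw_lab (DUnion e f) = (\<lambda>x. if x \<in> cw_verts e then cw_lab e x else cw_lab f x)"
| "cw_lab (Join i j e) = cw_lab e"
| "cw_lab (Relabel i j e) = (\<lambda>x. if cw_lab e x = i then j else cw_lab e x)"

fun cw_edge :: "('v, 'a) cwexp \<Rightarrow> 'v \<Rightarrow> 'v \<Rightarrow> bool" where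
  "cw_edge (Create v i) = (\<lambda>x y. False)"
| "cw_edge (DUnion e f) = (\<lambda>x y. cw_edge e x y \<or> cw_edge f x y)"
| "cw_edge (Join i j e) = (\<lambda>x y. cw_edge e x y \<or>
     (x \<in> cw_verts e \<and> y \<in> cw_verts e \<and>
      ((cw_lab e x = i \<and> cw_lab e y = j) \<or> (cw_lab e x = j \<and> cw_lab e y = i))))"
| "cw_edge (Relabel i j e) = cw_edge e"

fun cw_wf :: "('v, 'a) cwexp \<Rightarrow> bool" where
  "cw_wf (Create v i) = True"
| "cw_wf (DUnion e f) = (cw_wf e \<and> cw_wf f \<and> cw_verts e \<inter> cw_verts f = {})"
| "cw_wf (Join i j e) = (i \<noteq> j \<and> cw_wf e)"
| "cw_wf (Relabel i j e) = cw_wf e"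

fun cw_labels :: "('v, 'a) cwexp \<Rightarrow> 'a set" where
  "cw_labels (Create v i) = {i}"
| "cw_labels (DUnion e f) = cw_labels e \<union> cw_labels f"
| "cw_labels (Join i j e) = {i, j} \<union> cw_labels e"
| "cw_labels (Relabel i j e) = {i, j} \<union> cw_labels e"

text \<open>Labels available during
the construction are those of L's codomain (Inl) plus unboundedly many auxiliary
labels (Inr); the final labeling must be exactly L.\<close>
definition cw_constructs ::
  "('v, 'l + nat) cwexp \<Rightarrow> 'v set \<Rightarrow> ('v \<Rightarrow> 'v \<Rightarrow> bool) \<Rightarrow> ('v \<Rightarrow> 'l) \<Rightarrow> bool" where
  "cw_constructs e V E L \<longleftrightarrow> cw_wf e \<and> cw_verts e = V \<and>
     (\<forall>x\<in>V. \<forall>y\<in>V. cw_edge e x y \<longleftrightarrow> E x y) \<and>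
     (\<forall>x\<in>V. cw_lab e x = Inl (L x))"

definition cwd :: "'v set \<Rightarrow> ('v \<Rightarrow> 'v \<Rightarrow> bool) \<Rightarrow> ('v \<Rightarrow> 'l) \<Rightarrow> nat" where
  "cwd V E L = (LEAST k. \<exists>e. cw_constructs e V E L \<and> card (cw_labels e) = k)"

end

theory Submission
  imports Defs
begin

fun joins :: "'a \<Rightarrow> 'a list \<Rightarrow> ('v, 'a) cwexp \<Rightarrow> ('v, 'a) cwexp" where
  "joins T [] e = e"
| "joins T (j # js) e = Join T j (joins T js e)"

lemma joins_verts[simp]: "cw_verts (joins T js e) = cw_verts e" by (induction js) auto
lemma joins_lab[simp]: "cw_lab (joins T js e) = cw_lab e" by (induction js) auto
lemma joins_wf[simp]: "cw_wf (joins T js e) \<longleftrightarrow> (T \<notin> set js \<and> cw_wf e)" by (induction js) auto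
lemma joins_labels: "cw_labels (joins T js e) \<subseteq> insert T (set js \<union> cw_labels e)" by (induction js) auto
lemma joins_edge: "cw_edge (joins T js e) x y \<longleftrightarrow> cw_edge e x y \<or> (x \<in> cw_verts e \<and> y \<in> cw_verts e \<and>
   ((cw_lab e x = T \<and> cw_lab e y \<in> set js) \<or> (cw_lab e x \<in> set js \<and> cw_lab e y = T)))"
  by (induction js) auto

lemma edge_verts: "cw_edge e x y \<Longrightarrow> x \<in> cw_verts e \<and> y \<in> cw_verts e"
  by (induction e) auto

lemma build:
  fixes S :: "'v set" and lab :: "'v \<Rightarrow> 'a" and J :: "'a \<Rightarrow> 'a list"
  assumes "finite S" "S \<noteq> {}" "\<forall>x\<in>S. \<not> E x x" "\<forall>x\<in>S. \<forall>y\<in>S. E x y \<longleftrightarrow> E y x"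
    and "\<forall>x\<in>S. lab x \<noteq> T" "\<forall>x\<in>S. T \<notin> set (J (lab x))"
    and "\<forall>S'. S' \<subseteq> S \<and> S' \<noteq> {} \<longrightarrow> (\<exists>v\<in>S'. \<forall>u\<in>S'-{v}. E v u \<longleftrightarrow> lab u \<in> set (J (lab v)))"
  shows "\<exists>e. cw_wf e \<and> cw_verts e = S \<and> (\<forall>x\<in>S. \<forall>y\<in>S. cw_edge e x y \<longleftrightarrow> E x y)
     \<and> (\<forall>x\<in>S. cw_lab e x = lab x) \<and> cw_labels e \<subseteq> insert T (lab ` S \<union> (\<Union>x\<in>S. set (J (lab x))))"
  using assms
proof (induction S rule: finite_psubset_induct)
  case (psubset S)
  from psubset.prems(6) psubset.prems(1) obtain v where v: "v \<in> S"
    and hv: "\<forall>u\<in>S-{v}. E v u \<longleftrightarrow> lab u \<in> set (J (lab v))" by blast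
  show ?case
  proof (cases "S = {v}")
    case True
    show ?thesis
      apply (rule exI[of _ "Create v (lab v)"])
      using True psubset.prems by auto
  next
    case False
    define S0 where "S0 = S - {v}"
    have S0: "S0 \<subset> S" "S0 \<noteq> {}" using v False unfolding S0_def by auto
    have "\<exists>e. cw_wf e \<and> cw_verts e = S0 \<and> (\<forall>x\<in>S0. \<forall>y\<in>S0. cw_edge e x y \<longleftrightarrow> E x y)
     \<and> (\<forall>x\<in>S0. cw_lab e x = lab x) \<and> cw_labels e \<subseteq> insert T (lab ` S0 \<union> (\<Union>x\<in>S0. set (J (lab x))))"
      apply (rule psubset.IH[OF S0(1) S0(2)])
      using S0 psubset.prems by blast+
    then obtain e0 where e0: "cw_wf e0" "cw_verts e0 = S0" "\<forall>x\<in>S0. \<forall>y\<in>S0. cw_edge e0 x y \<longleftrightarrow> E x y"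
      "\<forall>x\<in>S0. cw_lab e0 x = lab x" "cw_labels e0 \<subseteq> insert T (lab ` S0 \<union> (\<Union>x\<in>S0. set (J (lab x))))"
      by blast
    have vS0: "v \<notin> S0" unfolding S0_def by auto
    have SS: "S = insert v S0" using v unfolding S0_def by auto
    define e where "e = Relabel T (lab v) (joins T (J (lab v)) (DUnion e0 (Create v T)))"
    show ?thesis
    proof (rule exI[of _ e], intro conjI)
      show "cw_wf e" using e0 vS0 v psubset.prems by (simp add: e_def)
      show "cw_verts e = S" using e0 SS by (simp add: e_def)
      show "\<forall>x\<in>S. cw_lab e x = lab x" using e0 SS vS0 psubset.prems(4) by (auto simp: e_def)
      show "cw_labels e \<subseteq> insert T (lab ` S \<union> (\<Union>x\<in>S. set (J (lab x))))"
        using e0(5) joins_labels[of T "J (lab v)" "DUnion e0 (Create v T)"] v SS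
        by (auto simp: e_def)
      show "\<forall>x\<in>S. \<forall>y\<in>S. cw_edge e x y \<longleftrightarrow> E x y"
      proof (intro ballI)
        fix x y assume x: "x \<in> S" and y: "y \<in> S"
        have nx: "\<not> cw_edge e0 v z" "\<not> cw_edge e0 z v" for z using edge_verts[of e0] e0(2) vS0 by blast+
        have l0: "\<forall>z\<in>S0. lab z \<noteq> T" using psubset.prems(4) SS by auto
        have TJ: "T \<notin> set (J (lab v))" using psubset.prems(5) v by auto
        have ee: "cw_edge e x y \<longleftrightarrow> cw_edge e0 x y \<or>
            ((cw_lab (DUnion e0 (Create v T)) x = T \<and> cw_lab (DUnion e0 (Create v T)) y \<in> set (J (lab v))) \<or>
             (cw_lab (DUnion e0 (Create v T)) x \<in> set (J (lab v)) \<and> cw_lab (DUnion e0 (Create v T)) y = T))"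
          using x y SS e0(2) by (simp add: e_def joins_edge)
        have lD: "cw_lab (DUnion e0 (Create v T)) z = (if z = v then T else lab z)" if "z \<in> S" for z
          using that SS e0(2,4) vS0 by auto
        show "cw_edge e x y \<longleftrightarrow> E x y"
        proof (cases "x = v")
          case True
          show ?thesis
          proof (cases "y = v")
            case True
            then show ?thesis using \<open>x = v\<close> ee lD[OF v] nx TJ psubset.prems(2) v by simp
          next
            case False
            then have "y \<in> S - {v}" using y by auto
            then show ?thesis using \<open>x = v\<close> ee lD[OF y] lD[OF v] nx TJ hv l0 SS by auto
          qed
        next
          case False
          then have xS0: "x \<in> S0" using x SS by auto
          show ?thesis
          proof (cases "y = v")
            case True
            have sym: "E x v \<longleftrightarrow> E v x" using psubset.prems(3) x v by blast
            have "x \<in> S - {v}" using xS0 S0_def by auto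
            then show ?thesis using True ee lD[OF x] lD[OF v] nx TJ hv l0 xS0 sym by auto
          next
            case False
            then have "y \<in> S0" using y SS by auto
            then show ?thesis using xS0 l0 e0 ee lD[OF x] lD[OF y] \<open>x \<noteq> v\<close> False by auto
          qed
        qed
      qed
    qed
  qed
qed

theorem proposition8p5:
  fixes V :: "'v set" and E :: "'v \<Rightarrow> 'v \<Rightarrow> bool" and L :: "'v \<Rightarrow> 'l"
    and t :: nat and B C :: "nat \<Rightarrow> 'v set"
  assumes "simple_graph V E"
    and "t \<ge> 1"
    and "spike_partition V E t B C"
    and "p \<noteq> q"
    and "\<forall>i\<in>{1..t}. \<forall>b\<in>B i. L b = p"
    and "\<forall>i\<in>{1..t}. \<forall>c\<in>C i. L c = q"
  shows "cwd V E L \<le> 4"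
proof -
  note sg = assms(1)[unfolded simple_graph_def]
  have finV: "finite V" and symE: "\<And>x y. x \<in> V \<Longrightarrow> y \<in> V \<Longrightarrow> E x y \<longleftrightarrow> E y x"
    and irr: "\<And>x. x \<in> V \<Longrightarrow> \<not> E x x" using sg by auto
  note sp = assms(3)[unfolded spike_partition_def]
  have UV: "(\<Union>i\<in>{1..t}. B i \<union> C i) = V" using sp by (elim conjE) assumption
  have sp2: "\<forall>i\<in>{1..t}. B i \<noteq> {} \<and> C i \<noteq> {}" using sp by (elim conjE) assumption
  have sp3: "\<forall>i\<in>{1..t}. \<forall>j\<in>{1..t}. B i \<inter> C j = {}" using sp by (elim conjE) assumption
  have sp4: "\<forall>i\<in>{1..t}. \<forall>j\<in>{1..t}. i \<noteq> j \<longrightarrow> B i \<inter> B j = {} \<and> C i \<inter> C j = {}"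
    using sp by (elim conjE) assumption
  have BBd: "B i \<inter> B j = {}" and CCd: "C i \<inter> C j = {}" if "i \<in> {1..t}" "j \<in> {1..t}" "i \<noteq> j" for i j
    using sp4 that by blast+
  have sp5: "\<forall>i\<in>{1..t}. is_clique E (B i) \<and> is_clique E (C i)" using sp by (elim conjE) assumption
  have sp6: "\<forall>i\<in>{1..t}. \<forall>j\<in>{1..t}. i \<noteq> j \<longrightarrow>
        anticomplete_to E (B i) (B j) \<and> complete_to E (C i) (C j) \<and> anticomplete_to E (B i) (C j)"
    using sp by (elim conjE) assumption
  have sp7: "\<forall>i\<in>{1..t}. \<exists>bs. distinct bs \<and> set bs = B i \<and>
        (\<forall>k l. k \<le> l \<and> l < length bs \<longrightarrow>
           nbhd V E (bs ! l) \<inter> C i \<subseteq> nbhd V E (bs ! k) \<inter> C i)" using sp by (elim conjE) assumption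
  have BV: "B i \<subseteq> V" and CV: "C i \<subseteq> V" if "i \<in> {1..t}" for i using UV that by blast+
  have ne: "B i \<noteq> {}" "C i \<noteq> {}" if "i \<in> {1..t}" for i using sp2 that by blast+
  have BCd: "B i \<inter> C j = {}" if "i \<in> {1..t}" "j \<in> {1..t}" for i j using sp3 that by blast
  have cl: "is_clique E (B i)" "is_clique E (C i)" if "i \<in> {1..t}" for i using sp5 that by blast+
  have adj: "anticomplete_to E (B i) (B j)" "complete_to E (C i) (C j)" "anticomplete_to E (B i) (C j)"
    if "i \<in> {1..t}" "j \<in> {1..t}" "i \<noteq> j" for i j using sp6 that by blast+
  have nest: "\<exists>bs. distinct bs \<and> set bs = B i \<and>
        (\<forall>k l. k \<le> l \<and> l < length bs \<longrightarrow>
           nbhd V E (bs ! l) \<inter> C i \<subseteq> nbhd V E (bs ! k) \<inter> C i)" if "i \<in> {1..t}" for i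
    using sp7 that by blast
  define lb :: "'v \<Rightarrow> nat \<Rightarrow> 'l + nat" where "lb x i = (if x \<in> B i then Inr 0 else Inr 1)" for i x
  define J :: "'l + nat \<Rightarrow> ('l + nat) list" where "J a = (if a = Inr 0 then [Inr 0, Inr 1] else [Inr 1])" for a
  have G: "\<exists>g :: ('v, 'l + nat) cwexp. cw_wf g \<and> cw_verts g = B i \<union> C i \<and> (\<forall>x\<in>B i \<union> C i. \<forall>y\<in>B i \<union> C i. cw_edge g x y \<longleftrightarrow> E x y)
     \<and> (\<forall>x\<in>B i \<union> C i. cw_lab g x = (if x \<in> B i then Inr 0 else Inr 1))
     \<and> cw_labels g \<subseteq> {Inl p, Inr 0, Inr 1}" if i: "i \<in> {1..t}" for i
  proof -
    define S where "S = B i \<union> C i"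
    have SV: "S \<subseteq> V" using BV[OF i] CV[OF i] S_def by auto
    have elim: "\<exists>v\<in>S'. \<forall>u\<in>S'-{v}. E v u \<longleftrightarrow> (\<lambda>x. lb x i) u \<in> set (J ((\<lambda>x. lb x i) v))"
      if S': "S' \<subseteq> S" "S' \<noteq> {}" for S'
    proof (cases "\<exists>c\<in>S' \<inter> C i. \<forall>b\<in>S' \<inter> B i. \<not> E c b")
      case True
      then obtain c where c: "c \<in> S' \<inter> C i" "\<forall>b\<in>S' \<inter> B i. \<not> E c b" by blast
      have cB: "c \<notin> B i" using c BCd[OF i i] by blast
      show ?thesis
      proof (rule bexI[of _ c], intro ballI)
        fix u assume u: "u \<in> S' - {c}"
        show "E c u \<longleftrightarrow> lb u i \<in> set (J (lb c i))"
        proof (cases "u \<in> B i")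
          case True
          then show ?thesis using c u cB by (auto simp: lb_def J_def)
        next
          case False
          then have "u \<in> C i" using u S' S_def by auto
          then have "E c u" using cl(2)[OF i] c u unfolding is_clique_def by auto
          then show ?thesis using False cB by (auto simp: lb_def J_def)
        qed
      qed (use c in blast)
    next
      case False
      then have hb: "\<forall>c\<in>S' \<inter> C i. \<exists>b\<in>S' \<inter> B i. E c b" by blast
      have "S' \<inter> B i \<noteq> {}"
      proof
        assume "S' \<inter> B i = {}"
        then have "S' \<inter> C i = {}" using hb by blast
        then show False using \<open>S' \<inter> B i = {}\<close> S' S_def by auto
      qed
      obtain bs where bs: "distinct bs" "set bs = B i"
        "\<forall>k l. k \<le> l \<and> l < length bs \<longrightarrow> nbhd V E (bs ! l) \<inter> C i \<subseteq> nbhd V E (bs ! k) \<inter> C i"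
        using nest[OF i] by blast
      have ex: "\<exists>k. k < length bs \<and> bs ! k \<in> S'"
        using \<open>S' \<inter> B i \<noteq> {}\<close> bs(2) by (metis disjoint_iff in_set_conv_nth)
      define k where "k = (LEAST k. k < length bs \<and> bs ! k \<in> S')"
      have k: "k < length bs" "bs ! k \<in> S'" using LeastI_ex[OF ex] k_def by auto
      have kmin: "k \<le> l" if "l < length bs" "bs ! l \<in> S'" for l
        using Least_le[of "\<lambda>k. k < length bs \<and> bs ! k \<in> S'" l] that k_def by auto
      define v where "v = bs ! k"
      have vB: "v \<in> B i" using k bs(2) v_def by auto
      show ?thesis
      proof (rule bexI[of _ v], intro ballI)
        fix u assume u: "u \<in> S' - {v}"
        show "E v u \<longleftrightarrow> lb u i \<in> set (J (lb v i))"
        proof (cases "u \<in> B i")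
          case True
          then have "E v u" using cl(1)[OF i] vB u unfolding is_clique_def by auto
          then show ?thesis using True vB by (auto simp: lb_def J_def)
        next
          case False
          then have uC: "u \<in> C i" using u S' S_def by auto
          then obtain b where b: "b \<in> S' \<inter> B i" "E u b" using hb u by blast
          then obtain l where l: "l < length bs" "bs ! l = b" using bs(2) by (metis IntD2 in_set_conv_nth)
          have "k \<le> l" using kmin l b by auto
          then have sub: "nbhd V E b \<inter> C i \<subseteq> nbhd V E v \<inter> C i" using bs(3) l v_def by blast
          have uV: "u \<in> V" and bVV: "b \<in> V" using uC b BV[OF i] CV[OF i] by auto
          have "E b u" using symE[OF uV bVV] b by simp
          then have "u \<in> nbhd V E b \<inter> C i" using uV uC by (simp add: nbhd_def)
          then have "E v u" using sub by (auto simp: nbhd_def)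
          then show ?thesis using False vB by (auto simp: lb_def J_def)
        qed
      qed (use k v_def in blast)
    qed
    have "\<exists>e. cw_wf e \<and> cw_verts e = S \<and> (\<forall>x\<in>S. \<forall>y\<in>S. cw_edge e x y \<longleftrightarrow> E x y)
     \<and> (\<forall>x\<in>S. cw_lab e x = lb x i) \<and> cw_labels e \<subseteq> insert (Inl p) ((\<lambda>x. lb x i) ` S \<union> (\<Union>x\<in>S. set (J (lb x i))))"
    proof (rule build)
      show "finite S" using SV finV finite_subset by blast
      show "S \<noteq> {}" using ne[OF i] S_def by auto
      show "\<forall>x\<in>S. \<not> E x x" using SV irr by auto
      show "\<forall>x\<in>S. \<forall>y\<in>S. E x y \<longleftrightarrow> E y x" using SV symE by blast
      show "\<forall>x\<in>S. lb x i \<noteq> Inl p" by (simp add: lb_def)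
      show "\<forall>x\<in>S. Inl p \<notin> set (J (lb x i))" by (simp add: lb_def J_def)
      show "\<forall>S'. S' \<subseteq> S \<and> S' \<noteq> {} \<longrightarrow> (\<exists>v\<in>S'. \<forall>u\<in>S'-{v}. E v u \<longleftrightarrow> lb u i \<in> set (J (lb v i)))"
        using elim by blast
    qed
    then obtain e where e: "cw_wf e" "cw_verts e = S" "\<forall>x\<in>S. \<forall>y\<in>S. cw_edge e x y \<longleftrightarrow> E x y"
      "\<forall>x\<in>S. cw_lab e x = lb x i" "cw_labels e \<subseteq> insert (Inl p) ((\<lambda>x. lb x i) ` S \<union> (\<Union>x\<in>S. set (J (lb x i))))"
      by blast
    have "cw_labels e \<subseteq> {Inl p, Inr 0, Inr 1}"
      using e(5) by (auto simp: lb_def J_def split: if_splits)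
    then show ?thesis using e(1-4) unfolding S_def lb_def by (intro exI[of _ e] conjI) simp_all
  qed
  define U where "U i = (\<Union>j\<in>{1..i}. B j \<union> C j)" for i
  define Lab :: "('l + nat) set" where "Lab = {Inl p, Inl q, Inr 0, Inr 1}"
  define Inv where "Inv i e \<longleftrightarrow> cw_wf e \<and> cw_verts e = U i \<and> (\<forall>x\<in>U i. \<forall>y\<in>U i. cw_edge e x y \<longleftrightarrow> E x y)
     \<and> (\<forall>x\<in>U i. cw_lab e x = Inl (L x)) \<and> cw_labels e \<subseteq> Lab" for i and e :: "('v, 'l + nat) cwexp"
  have LB: "L x = p" if "i \<in> {1..t}" "x \<in> B i" for i x using assms(5) that by blast
  have LC: "L x = q" if "i \<in> {1..t}" "x \<in> C i" for i x using assms(6) that by blast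
  have USuc: "U (Suc i) = U i \<union> (B (Suc i) \<union> C (Suc i))" for i
    by (auto simp: U_def atLeastAtMostSuc_conv)
  have cross: "(E x y \<longleftrightarrow> (L x = q \<and> y \<in> C (Suc i))) \<and> (E y x \<longleftrightarrow> (L x = q \<and> y \<in> C (Suc i)))
     \<and> (y \<in> C (Suc i) \<longleftrightarrow> y \<notin> B (Suc i)) \<and> x \<notin> B (Suc i) \<union> C (Suc i)"
    if x: "x \<in> U i" and y: "y \<in> B (Suc i) \<union> C (Suc i)" and si: "Suc i \<le> t" for x y i
  proof -
    obtain j where j: "j \<in> {1..i}" "x \<in> B j \<union> C j" using x U_def by auto
    have jt: "j \<in> {1..t}" and st: "Suc i \<in> {1..t}" and jn: "j \<noteq> Suc i" using j si by auto
    have xV: "x \<in> V" and yV: "y \<in> V" using BV CV jt st j y by blast+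
    have sy: "E y x \<longleftrightarrow> E x y" using symE[OF xV yV] by simp
    have yy: "y \<in> C (Suc i) \<longleftrightarrow> y \<notin> B (Suc i)" using y BCd[OF st st] by blast
    have xn: "x \<notin> B (Suc i) \<union> C (Suc i)"
      using j BBd[OF jt st jn] CCd[OF jt st jn] BCd[OF jt st] BCd[OF st jt] by blast
    have "E x y \<longleftrightarrow> (L x = q \<and> y \<in> C (Suc i))"
    proof (cases "x \<in> B j")
      case True
      then have "L x = p" using LB jt by blast
      moreover have "\<not> E x y" using adj(1)[OF jt st jn] adj(3)[OF jt st jn] True y
        unfolding anticomplete_to_def by blast
      ultimately show ?thesis using assms(4) by auto
    next
      case False
      then have xC: "x \<in> C j" using j by auto
      then have "L x = q" using LC jt by blast
      moreover have "E x y \<longleftrightarrow> y \<in> C (Suc i)"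
      proof (cases "y \<in> C (Suc i)")
        case True
        then show ?thesis using adj(2)[OF jt st jn] xC unfolding complete_to_def by blast
      next
        case False
        then have "y \<in> B (Suc i)" using y by auto
        then have "\<not> E y x" using adj(3)[OF st jt] jn xC unfolding anticomplete_to_def by blast
        then show ?thesis using sy False by blast
      qed
      ultimately show ?thesis by auto
    qed
    then show ?thesis using sy yy xn by blast
  qed
  have main: "1 \<le> i \<longrightarrow> i \<le> t \<longrightarrow> (\<exists>e. Inv i e)" for i
  proof (induction i)
    case 0
    show ?case by simp
  next
    case (Suc i)
    show ?case
    proof (intro impI)
      assume "1 \<le> Suc i" "Suc i \<le> t"
      then have si: "Suc i \<in> {1..t}" by simp
      obtain g :: "('v, 'l + nat) cwexp" where g: "cw_wf g" "cw_verts g = B (Suc i) \<union> C (Suc i)"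
        "\<forall>x\<in>B (Suc i) \<union> C (Suc i). \<forall>y\<in>B (Suc i) \<union> C (Suc i). cw_edge g x y \<longleftrightarrow> E x y"
        "\<forall>x\<in>B (Suc i) \<union> C (Suc i). cw_lab g x = (if x \<in> B (Suc i) then Inr 0 else Inr 1)"
        "cw_labels g \<subseteq> {Inl p, Inr 0, Inr 1}" using G[OF si] by blast
      have gL: "cw_lab g x = (if x \<in> B (Suc i) then Inr 0 else Inr 1) \<and> (x \<in> B (Suc i) \<longrightarrow> L x = p)
         \<and> (x \<notin> B (Suc i) \<longrightarrow> L x = q)"
        if "x \<in> B (Suc i) \<union> C (Suc i)" for x
        using g(4) that LB[OF si] LC[OF si] by auto
      show "\<exists>e. Inv (Suc i) e"
      proof (cases "i = 0")
        case True
        have U1: "U (Suc i) = B (Suc i) \<union> C (Suc i)" using True by (simp add: U_def)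
        show ?thesis
        proof (rule exI[of _ "Relabel (Inr 1) (Inl q) (Relabel (Inr 0) (Inl p) g)"])
          show "Inv (Suc i) (Relabel (Inr 1) (Inl q) (Relabel (Inr 0) (Inl p) g))"
            unfolding Inv_def U1 using g gL by (auto simp: Lab_def)
        qed
      next
        case False
        then obtain h where h: "Inv i h" using Suc.IH \<open>Suc i \<le> t\<close> by auto
        have h1: "cw_wf h" "cw_verts h = U i" "\<forall>x\<in>U i. \<forall>y\<in>U i. cw_edge h x y \<longleftrightarrow> E x y"
          "\<forall>x\<in>U i. cw_lab h x = Inl (L x)" "cw_labels h \<subseteq> Lab" using h unfolding Inv_def by auto
        have disj: "U i \<inter> (B (Suc i) \<union> C (Suc i)) = {}" using cross \<open>Suc i \<le> t\<close> ne[OF si] by blast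
        define e where "e = Relabel (Inr 1) (Inl q) (Relabel (Inr 0) (Inl p) (Join (Inl q) (Inr 1) (DUnion h g)))"
        have edh: "\<not> cw_edge h x y" if "x \<notin> U i \<or> y \<notin> U i" for x y using edge_verts[of h x y] h1(2) that by blast
        have edg: "\<not> cw_edge g x y" if "x \<notin> B (Suc i) \<union> C (Suc i) \<or> y \<notin> B (Suc i) \<union> C (Suc i)" for x y
          using edge_verts[of g x y] g(2) that by blast
        have lD: "cw_lab (DUnion h g) z = (if z \<in> U i then Inl (L z) else if z \<in> B (Suc i) then Inr 0 else Inr 1)"
          if "z \<in> U (Suc i)" for z using that h1(2,4) g(2,4) USuc by auto
        have ee: "cw_edge e x y \<longleftrightarrow> cw_edge h x y \<or> cw_edge g x y \<or>
           ((cw_lab (DUnion h g) x = Inl q \<and> cw_lab (DUnion h g) y = Inr 1) \<or>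
            (cw_lab (DUnion h g) x = Inr 1 \<and> cw_lab (DUnion h g) y = Inl q))"
          if "x \<in> U (Suc i)" "y \<in> U (Suc i)" for x y
          using that h1(2) g(2) USuc unfolding e_def by simp
        have Inve: "Inv (Suc i) e"
          unfolding Inv_def
        proof (intro conjI)
          show "cw_wf e" using h1(1) g(1) h1(2) g(2) disj by (simp add: e_def)
          show "cw_verts e = U (Suc i)" using h1(2) g(2) USuc by (simp add: e_def)
          show "cw_labels e \<subseteq> Lab" using h1(5) g(5) by (auto simp: e_def Lab_def)
          show "\<forall>x\<in>U (Suc i). cw_lab e x = Inl (L x)"
          proof
            fix x assume x: "x \<in> U (Suc i)"
            show "cw_lab e x = Inl (L x)"
            proof (cases "x \<in> U i")
              case True
              then show ?thesis using lD[OF x] by (simp add: e_def)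
            next
              case False
              then have "x \<in> B (Suc i) \<union> C (Suc i)" using x USuc by auto
              then show ?thesis using lD[OF x] False gL by (auto simp: e_def)
            qed
          qed
          show "\<forall>x\<in>U (Suc i). \<forall>y\<in>U (Suc i). cw_edge e x y \<longleftrightarrow> E x y"
          proof (intro ballI)
            fix x y assume x: "x \<in> U (Suc i)" and y: "y \<in> U (Suc i)"
            note E0 = ee[OF x y] lD[OF x] lD[OF y]
            show "cw_edge e x y \<longleftrightarrow> E x y"
            proof (cases "x \<in> U i")
              case xU: True
              show ?thesis
              proof (cases "y \<in> U i")
                case True
                have "\<not> cw_edge g x y" using edg[of x y] xU disj by blast
                then show ?thesis using xU True E0 h1(3) by auto
              next
                case False
                then have yG: "y \<in> B (Suc i) \<union> C (Suc i)" using y USuc by auto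
                note cr = cross[OF xU yG \<open>Suc i \<le> t\<close>]
                have "\<not> cw_edge g x y" "\<not> cw_edge h x y" using edg[of x y] edh[of x y] cr False by blast+
                then show ?thesis using xU False E0 cr by auto
              qed
            next
              case xG0: False
              then have xG: "x \<in> B (Suc i) \<union> C (Suc i)" using x USuc by auto
              show ?thesis
              proof (cases "y \<in> U i")
                case True
                note cr = cross[OF True xG \<open>Suc i \<le> t\<close>]
                have "\<not> cw_edge g x y" "\<not> cw_edge h x y" using edg[of x y] edh[of x y] cr xG0 by blast+
                then show ?thesis using True xG0 E0 cr by auto
              next
                case False
                then have yG: "y \<in> B (Suc i) \<union> C (Suc i)" using y USuc by auto
                have "\<not> cw_edge h x y" using edh[of x y] xG0 by blast
                then show ?thesis using xG0 False E0 g(3) xG yG by auto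
              qed
            qed
          qed
        qed
        then show ?thesis by blast
      qed
    qed
  qed
  obtain e where e: "Inv t e" using main[of t] assms(2) by blast
  have Ut: "U t = V" using UV U_def by simp
  have ce: "cw_constructs e V E L" using e Ut unfolding Inv_def cw_constructs_def by simp
  have "cwd V E L \<le> card (cw_labels e)"
    unfolding cwd_def by (rule Least_le) (use ce in blast)
  also have "\<dots> \<le> card Lab"
    using e unfolding Inv_def by (intro card_mono) (auto simp: Lab_def)
  also have "\<dots> \<le> 4"
  proof -
    have "Lab = set [Inl p, Inl q, Inr 0, Inr 1]" by (simp add: Lab_def)
    then show ?thesis using card_length[of "[Inl p, Inl q, Inr 0, Inr 1 :: 'l + nat]"] by simp
  qed
  finally show ?thesis .
qed
end
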